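(* Let $q$ be a prime power and $\eta\ge0$ an integer. Let $\Delta^*=\bigcup_{(\delta_T,\delta_X)}\Delta^*(\delta_T,\delta_X)$, the union over $(\delta_T,\delta_X)\in\mathbb{Z}\times\mathbb{N}$ with $\delta_T+\eta\delta_X\ge0$. Then $\Delta^*$ is exactly the set of monomials of $R$ that are not divisible by the leading term of any polynomial of $\mathcal{G}$.
   Context: $R=\mathbb{F}_q[T_1,T_2,X_1,X_2]$; the bidegree of $T_1^{c_1}T_2^{c_2}X_1^{d_1}X_2^{d_2}$ is $(c_1+c_2-\eta d_1,d_1+d_2)$; $R(\delta_T,\delta_X)$ is the span of monomials of that bidegree, $\mathcal{M}(\delta_T,\delta_X)$ the set of these monomials; $\delta=\delta_T+\eta\delta_X$. Leading terms are taken for the monomial order: $T_1^{c'_1}T_2^{c'_2}X_1^{d'_1}X_2^{d'_2}<T_1^{c_1}T_2^{c_2}X_1^{d_1}X_2^{d_2}$ iff $d'_1+d'_2<d_1+d_2$, or ($d'_1+d'_2=d_1+d_2$ and $d'_2<d_2$), or ($d'_1=d_1,d'_2=d_2,c'_2<c_2$), or ($d'_1=d_1,d'_2=d_2,c'_2=c_2,c'_1<c_1$). For $\delta\ge0$: $\mathcal{P}=\{(a,b)\in\mathbb{N}^2:a\le\delta_X,\eta a+b\le\delta\}$; $M(d_2,c_2)=T_1^{\delta-\eta d_2-c_2}T_2^{c_2}X_1^{\delta_X-d_2}X_2^{d_2}$; $A=\delta_X$ if $\delta_T\ge0$, $A=\delta/\eta$ if $\delta_T<0$; $\mathcal{A}_X=\{\alpha\in\mathbb{N}:\alpha\le\min(\lfloor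 A\rfloor,q-1)\}\cup(\{A\}\cap\mathbb{N})$; $\mathcal{K}=\{(\alpha,\beta)\in\mathbb{N}^2:\alpha\in\mathcal{A}_X,\beta\le\min(\delta-\eta\alpha,q)-1\text{ or }\beta=\delta-\eta\alpha\}$; (H): $\eta\ge2$, $\delta_T<0$, $\eta\mid\delta_T$, $q\le\delta_X+\delta_T/\eta$; $\mathcal{K}^*=\mathcal{K}\setminus\{(\delta/\eta,0)\}$ if (H), else $\mathcal{K}$; $\Delta^*(\delta_T,\delta_X)=\{M(\alpha,\beta):(\alpha,\beta)\in\mathcal{K}^*\}$. $p(d_2,c_2)=(d'_2,c'_2)$ with $d'_2=d_2$ if $d_2\in\{0,A\}$, else $d'_2\in\{1,\dots,q-1\}$, $d'_2\equiv d_2\pmod{q-1}$; $c'_2=0$ if $c_2=0$; $c'_2=\delta-\eta d'_2$ if $c_2=\delta-\eta d_2$; else $c'_2\in\{1,\dots,q-1\}$, $c'_2\equiv c_2\pmod{q-1}$. Linear $\pi_{(\delta_T,\delta_X)}(M(d_2,c_2))=M(p(d_2,c_2))$, except if (H) and $(d_2,c_2)=(\delta/\eta,0)$: with $\delta/\eta=k(q-1)+r$, $r\in\{1,\dots,q-1\}$, $\pi(M(\delta/\eta,0))=M(r,0)+M(r,\eta k(q-1))-M(r,q-1)$. $\mathcal{G}$ is the union over all $(\delta_T,\delta_X)\in\mathbb{Z}\times\mathbb{N}$ with $\delta\ge0$ of $\{M-\pi_{(\delta_T,\delta_X)}(M):M\in\mathcal{M}(\delta_T,\delta_X)\setminus\Delta^*(\delta_T,\delta_X)\}$.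 *)

theory Defs
  imports Main "HOL.Rat"
begin

text \<open>A monomial T1^c1 T2^c2 X1^d1 X2^d2 of R = F_q[T1,T2,X1,X2] is encoded by its
exponent vector (c1, c2, d1, d2).\<close>

type_synonym mono = "nat \<times> nat \<times> nat \<times> nat"

definition bideg :: "nat \<Rightarrow> mono \<Rightarrow> int \<times> nat" where
  "bideg \<eta> m = (case m of (c1, c2, d1, d2) \<Rightarrow>
      (int c1 + int c2 - int \<eta> * int d1, d1 + d2))"

definition Mons :: "nat \<Rightarrow> int \<Rightarrow> nat \<Rightarrow> mono set" where
  "Mons \<eta> \<delta>T \<delta>X = {m. bideg \<eta> m = (\<delta>T, \<delta>X)}"

definition mono_less :: "mono \<Rightarrow> mono \<Rightarrow> bool" where
  "mono_less m' m = (case m' of (c1', c2', d1', d2') \<Rightarrow> case m of (c1, c2, d1, d2) \<Rightarrow>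
      d1' + d2' < d1 + d2
    \<or> (d1' + d2' = d1 + d2 \<and> d2' < d2)
    \<or> (d1' = d1 \<and> d2' = d2 \<and> c2' < c2)
    \<or> (d1' = d1 \<and> d2' = d2 \<and> c2' = c2 \<and> c1' < c1))"

definition is_leading :: "(mono \<Rightarrow> 'a::zero) \<Rightarrow> mono \<Rightarrow> bool" where
  "is_leading f m \<longleftrightarrow> f m \<noteq> 0 \<and> (\<forall>m'. f m' \<noteq> 0 \<longrightarrow> m' = m \<or> mono_less m' m)"

definition mono_dvd :: "mono \<Rightarrow> mono \<Rightarrow> bool" where
  "mono_dvd a b = (case a of (a1, a2, a3, a4) \<Rightarrow> case b of (b1, b2, b3, b4) \<Rightarrow>
      a1 \<le> b1 \<and> a2 \<le> b2 \<and> a3 \<le> b3 \<and> a4 \<le> b4)"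

definition mon_poly :: "mono \<Rightarrow> (mono \<Rightarrow> 'a::{zero,one})" where
  "mon_poly m = (\<lambda>x. if x = m then 1 else 0)"

definition ddelta :: "nat \<Rightarrow> int \<Rightarrow> nat \<Rightarrow> int" where
  "ddelta \<eta> \<delta>T \<delta>X = \<delta>T + int \<eta> * int \<delta>X"

definition Mmon :: "nat \<Rightarrow> int \<Rightarrow> nat \<Rightarrow> nat \<Rightarrow> nat \<Rightarrow> mono" where
  "Mmon \<eta> \<delta>T \<delta>X d2 c2 =
     (nat (ddelta \<eta> \<delta>T \<delta>X - int \<eta> * int d2 - int c2), c2, \<delta>X - d2, d2)"

definition Aval :: "nat \<Rightarrow> int \<Rightarrow> nat \<Rightarrow> rat" where
  "Aval \<eta> \<delta>T \<delta>X = (if \<delta>T \<ge> 0 then of_nat \<delta>X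
                     else of_int (ddelta \<eta> \<delta>T \<delta>X) / of_nat \<eta>)"

definition AX :: "nat \<Rightarrow> nat \<Rightarrow> int \<Rightarrow> nat \<Rightarrow> nat set" where
  "AX q \<eta> \<delta>T \<delta>X =
     {\<alpha>. int \<alpha> \<le> min \<lfloor>Aval \<eta> \<delta>T \<delta>X\<rfloor> (int q - 1)} \<union> {\<alpha>. of_nat \<alpha> = Aval \<eta> \<delta>T \<delta>X}"

definition Kset :: "nat \<Rightarrow> nat \<Rightarrow> int \<Rightarrow> nat \<Rightarrow> (nat \<times> nat) set" where
  "Kset q \<eta> \<delta>T \<delta>X = {(\<alpha>, \<beta>). \<alpha> \<in> AX q \<eta> \<delta>T \<delta>X \<and>
      (int \<beta> \<le> min (ddelta \<eta> \<delta>T \<delta>X - int \<eta> * int \<alpha>) (int q) - 1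
       \<or> int \<beta> = ddelta \<eta> \<delta>T \<delta>X - int \<eta> * int \<alpha>)}"

definition Hcond :: "nat \<Rightarrow> nat \<Rightarrow> int \<Rightarrow> nat \<Rightarrow> bool" where
  "Hcond q \<eta> \<delta>T \<delta>X \<longleftrightarrow> \<eta> \<ge> 2 \<and> \<delta>T < 0 \<and> int \<eta> dvd \<delta>T \<and>
      int q \<le> int \<delta>X + \<delta>T div int \<eta>"

definition Kstar :: "nat \<Rightarrow> nat \<Rightarrow> int \<Rightarrow> nat \<Rightarrow> (nat \<times> nat) set" where
  "Kstar q \<eta> \<delta>T \<delta>X = (if Hcond q \<eta> \<delta>T \<delta>X
      then Kset q \<eta> \<delta>T \<delta>X - {(nat (ddelta \<eta> \<delta>T \<delta>X div int \<eta>), 0)}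
      else Kset q \<eta> \<delta>T \<delta>X)"

definition Delta_star :: "nat \<Rightarrow> nat \<Rightarrow> int \<Rightarrow> nat \<Rightarrow> mono set" where
  "Delta_star q \<eta> \<delta>T \<delta>X = (\<lambda>(\<alpha>, \<beta>). Mmon \<eta> \<delta>T \<delta>X \<alpha> \<beta>) ` Kstar q \<eta> \<delta>T \<delta>X"

text \<open>The map p; the representative in {1,...,q-1} of a residue class of n \<ge> 1
  modulo q-1 is (n-1) mod (q-1) + 1.\<close>
definition pmap :: "nat \<Rightarrow> nat \<Rightarrow> int \<Rightarrow> nat \<Rightarrow> nat \<Rightarrow> nat \<Rightarrow> nat \<times> nat" where
  "pmap q \<eta> \<delta>T \<delta>X d2 c2 =
    (let d2' = (if d2 = 0 \<or> of_nat d2 = Aval \<eta> \<delta>T \<delta>X then d2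
                else (d2 - 1) mod (q - 1) + 1);
         c2' = (if c2 = 0 then 0
                else if int c2 = ddelta \<eta> \<delta>T \<delta>X - int \<eta> * int d2
                  then nat (ddelta \<eta> \<delta>T \<delta>X - int \<eta> * int d2')
                else (c2 - 1) mod (q - 1) + 1)
     in (d2', c2'))"

definition pi_mon :: "nat \<Rightarrow> nat \<Rightarrow> int \<Rightarrow> nat \<Rightarrow> mono \<Rightarrow> (mono \<Rightarrow> 'a::ring_1)" where
  "pi_mon q \<eta> \<delta>T \<delta>X m =
    (let d2 = snd (snd (snd m)); c2 = fst (snd m);
         s = nat (ddelta \<eta> \<delta>T \<delta>X div int \<eta>)
     in if Hcond q \<eta> \<delta>T \<delta>X \<and> d2 = s \<and> c2 = 0
        then (let r = (s - 1) mod (q - 1) + 1; k = (s - r) div (q - 1)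
              in (\<lambda>x. mon_poly (Mmon \<eta> \<delta>T \<delta>X r 0) x
                 + mon_poly (Mmon \<eta> \<delta>T \<delta>X r (\<eta> * k * (q - 1))) x
                 - mon_poly (Mmon \<eta> \<delta>T \<delta>X r (q - 1)) x))
        else mon_poly (case pmap q \<eta> \<delta>T \<delta>X d2 c2 of (a, b) \<Rightarrow> Mmon \<eta> \<delta>T \<delta>X a b))"

definition Gset :: "nat \<Rightarrow> nat \<Rightarrow> (mono \<Rightarrow> 'a::ring_1) set" where
  "Gset q \<eta> = {g. \<exists>\<delta>T \<delta>X m. ddelta \<eta> \<delta>T \<delta>X \<ge> 0 \<and>
      m \<in> Mons \<eta> \<delta>T \<delta>X - Delta_star q \<eta> \<delta>T \<delta>X \<and>
      g = (\<lambda>x. mon_poly m x - pi_mon q \<eta> \<delta>T \<delta>X m x)}"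

end

theory Submission
  imports Defs
begin


lemma dd: "ddelta \<eta> (int c1 + int c2 - int \<eta> * int d1) (d1 + d2) = int c1 + int c2 + int \<eta> * int d2"
  by (simp add: ddelta_def algebra_simps)

lemma Mmon_self: "Mmon \<eta> (int c1 + int c2 - int \<eta> * int d1) (d1+d2) d2 c2 = (c1,c2,d1,d2)"
  by (simp add: Mmon_def dd)

lemma A_ge: "of_nat d2 \<le> Aval \<eta> (int c1 + int c2 - int \<eta> * int d1) (d1+d2)"
proof (cases "int c1 + int c2 - int \<eta> * int d1 \<ge> 0")
  case True then show ?thesis by (simp add: Aval_def)
next
  case False
  then have "\<eta> > 0" by (cases \<eta>) auto
  then show ?thesis using False by (simp add: Aval_def dd le_divide_eq)
qed

lemma A_eq: "(of_nat d2 = Aval \<eta> (int c1 + int c2 - int \<eta> * int d1) (d1+d2)) \<longleftrightarrow>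
   (if int c1 + int c2 - int \<eta> * int d1 \<ge> 0 then d1 = 0 else c1 + c2 = 0)"
proof (cases "int c1 + int c2 - int \<eta> * int d1 \<ge> 0")
  case True then show ?thesis by (simp add: Aval_def)
next
  case False
  then have "\<eta> > 0" by (cases \<eta>) auto
  then have "(of_nat d2 = Aval \<eta> (int c1 + int c2 - int \<eta> * int d1) (d1+d2)) \<longleftrightarrow>
     (rat_of_nat d2 * of_nat \<eta> = of_int (int c1 + int c2 + int \<eta> * int d2))"
    using False by (simp add: Aval_def dd eq_divide_eq)
  also have "\<dots> \<longleftrightarrow> c1 + c2 = 0"
  proof -
    have "(rat_of_nat d2 * of_nat \<eta> = of_int (int c1 + int c2 + int \<eta> * int d2)) \<longleftrightarrow>
          (int d2 * int \<eta> = int c1 + int c2 + int \<eta> * int d2)"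
      by (metis of_int_eq_iff of_int_mult of_int_of_nat_eq)
    then show ?thesis by (simp add: algebra_simps, arith)
  qed
  finally show ?thesis using False by simp
qed

lemma Kset_iff:
  assumes "q \<ge> 1"
  shows "((d2,c2) \<in> Kset q \<eta> (int c1 + int c2 - int \<eta> * int d1) (d1+d2)) \<longleftrightarrow>
    ((d2 < q \<or> of_nat d2 = Aval \<eta> (int c1 + int c2 - int \<eta> * int d1) (d1+d2)) \<and> (c1 = 0 \<or> c2 < q))"
proof -
  have fl: "int d2 \<le> \<lfloor>Aval \<eta> (int c1 + int c2 - int \<eta> * int d1) (d1+d2)\<rfloor>"
    using A_ge by (simp add: le_floor_iff)
  show ?thesis using assms fl
    unfolding Kset_def AX_def dd by auto
qed

lemma H_iff:
  "(Hcond q \<eta> (int c1 + int c2 - int \<eta> * int d1) (d1+d2) \<and>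
    (d2, c2) = (nat (ddelta \<eta> (int c1 + int c2 - int \<eta> * int d1) (d1+d2) div int \<eta>), 0)) \<longleftrightarrow>
   (\<eta> \<ge> 2 \<and> c1 = 0 \<and> c2 = 0 \<and> d1 \<ge> 1 \<and> d2 \<ge> q)"
proof
  assume H: "Hcond q \<eta> (int c1 + int c2 - int \<eta> * int d1) (d1+d2) \<and>
    (d2, c2) = (nat (ddelta \<eta> (int c1 + int c2 - int \<eta> * int d1) (d1+d2) div int \<eta>), 0)"
  then have e2: "\<eta> \<ge> 2" and c2: "c2 = 0" and neg: "int c1 - int \<eta> * int d1 < 0"
    and dv: "int \<eta> dvd int c1 - int \<eta> * int d1"
    and qq: "int q \<le> int (d1+d2) + (int c1 - int \<eta> * int d1) div int \<eta>"
    and d2e: "d2 = nat ((int c1 + int \<eta> * int d2) div int \<eta>)"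
    by (auto simp: Hcond_def dd)
  have "(int c1 + int \<eta> * int d2) div int \<eta> = int c1 div int \<eta> + int d2" using e2 by simp
  moreover have "int c1 div int \<eta> \<ge> 0" by (metis of_nat_0_le_iff zdiv_int)
  ultimately have "int c1 div int \<eta> = 0" using d2e
    by (metis add.commute add_cancel_left_right int_nat_eq nat_int nat_int_add)
  then have "c1 div \<eta> = 0" by (metis of_nat_eq_0_iff zdiv_int)
  then have c1lt: "c1 < \<eta>" using e2 by (simp add: div_eq_0_iff)
  have "int \<eta> dvd (int c1 - int \<eta> * int d1) + int \<eta> * int d1" using dv by (intro dvd_add) auto
  then have "int \<eta> dvd int c1" by simp
  then have c1: "c1 = 0" using c1lt by (metis dvd_imp_le int_dvd_int_iff not_gr0 not_less)
  have "int c1 - int \<eta> * int d1 = int \<eta> * (- int d1)" using c1 by simp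
  moreover have ne: "int \<eta> \<noteq> 0" using e2 by simp
  ultimately have "(int c1 - int \<eta> * int d1) div int \<eta> = - int d1"
    by (simp only: nonzero_mult_div_cancel_left[OF ne])
  then show "\<eta> \<ge> 2 \<and> c1 = 0 \<and> c2 = 0 \<and> d1 \<ge> 1 \<and> d2 \<ge> q" using e2 c1 c2 neg qq
    by (cases d1) auto
next
  assume A: "\<eta> \<ge> 2 \<and> c1 = 0 \<and> c2 = 0 \<and> d1 \<ge> 1 \<and> d2 \<ge> q"
  then have ne: "int \<eta> \<noteq> 0" by simp
  have e1: "int c1 + int c2 - int \<eta> * int d1 = int \<eta> * (- int d1)" using A by simp
  have e2: "ddelta \<eta> (int c1 + int c2 - int \<eta> * int d1) (d1+d2) = int \<eta> * int d2"
    using A by (simp add: ddelta_def algebra_simps)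
  have "int \<eta> * (- int d1) div int \<eta> = - int d1" by (simp only: nonzero_mult_div_cancel_left[OF ne])
  moreover have "int \<eta> * int d2 div int \<eta> = int d2" by (simp only: nonzero_mult_div_cancel_left[OF ne])
  moreover have "int \<eta> * (- int d1) < 0" using A by (simp add: mult_pos_pos)
  moreover have "int \<eta> dvd int \<eta> * (- int d1)" by simp
  ultimately have "Hcond q \<eta> (int c1 + int c2 - int \<eta> * int d1) (d1+d2)"
    unfolding Hcond_def e1 using A by simp
  moreover have "nat (ddelta \<eta> (int c1 + int c2 - int \<eta> * int d1) (d1+d2) div int \<eta>) = d2"
    unfolding e2 using ne by simp
  ultimately show "Hcond q \<eta> (int c1 + int c2 - int \<eta> * int d1) (d1+d2) \<and>
    (d2, c2) = (nat (ddelta \<eta> (int c1 + int c2 - int \<eta> * int d1) (d1+d2) div int \<eta>), 0)"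
    using A by simp
qed




lemma Kstar_iff:
  assumes "q \<ge> 1"
  shows "((d2,c2) \<in> Kstar q \<eta> (int c1 + int c2 - int \<eta> * int d1) (d1+d2)) \<longleftrightarrow>
    ((c1 = 0 \<or> c2 < q) \<and> (d2 < q \<or> d1 = 0 \<or> (\<eta> = 1 \<and> c1 = 0 \<and> c2 = 0)))"
proof -
  have "((d2,c2) \<in> Kstar q \<eta> (int c1 + int c2 - int \<eta> * int d1) (d1+d2)) \<longleftrightarrow>
     ((d2,c2) \<in> Kset q \<eta> (int c1 + int c2 - int \<eta> * int d1) (d1+d2) \<and>
      \<not> (Hcond q \<eta> (int c1 + int c2 - int \<eta> * int d1) (d1+d2) \<and>
    (d2, c2) = (nat (ddelta \<eta> (int c1 + int c2 - int \<eta> * int d1) (d1+d2) div int \<eta>), 0)))"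
    unfolding Kstar_def by auto
  also have "\<dots> \<longleftrightarrow> ((d2 < q \<or> (if int c1 + int c2 - int \<eta> * int d1 \<ge> 0 then d1 = 0 else c1 + c2 = 0))
       \<and> (c1 = 0 \<or> c2 < q)) \<and> \<not> (\<eta> \<ge> 2 \<and> c1 = 0 \<and> c2 = 0 \<and> d1 \<ge> 1 \<and> d2 \<ge> q)"
    by (simp only: Kset_iff[OF assms] A_eq H_iff)
  also have "\<dots> \<longleftrightarrow> ((c1 = 0 \<or> c2 < q) \<and> (d2 < q \<or> d1 = 0 \<or> (\<eta> = 1 \<and> c1 = 0 \<and> c2 = 0)))"
  proof (cases "\<eta> \<ge> 2")
    case True
    then show ?thesis by auto
  next
    case False
    then have "\<eta> = 0 \<or> \<eta> = 1" by auto
    then show ?thesis by auto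
  qed
  finally show ?thesis .
qed

lemma Kset_bounds:
  assumes "(\<alpha>,\<beta>) \<in> Kset q \<eta> \<delta>T \<delta>X" "ddelta \<eta> \<delta>T \<delta>X \<ge> 0"
  shows "\<alpha> \<le> \<delta>X \<and> int \<eta> * int \<alpha> + int \<beta> \<le> ddelta \<eta> \<delta>T \<delta>X"
proof -
  have aA: "of_nat \<alpha> \<le> Aval \<eta> \<delta>T \<delta>X"
    using assms(1) unfolding Kset_def AX_def by (auto simp: le_floor_iff)
  have a1: "\<alpha> \<le> \<delta>X \<and> int \<eta> * int \<alpha> \<le> ddelta \<eta> \<delta>T \<delta>X"
  proof (cases "\<delta>T \<ge> 0")
    case True
    then have "\<alpha> \<le> \<delta>X" using aA by (simp add: Aval_def)
    then have "int \<eta> * int \<alpha> \<le> int \<eta> * int \<delta>X" by (simp add: mult_left_mono)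
    then show ?thesis using True \<open>\<alpha> \<le> \<delta>X\<close> by (simp add: ddelta_def)
  next
    case False
    then have "\<eta> > 0" using assms(2) by (cases \<eta>) (auto simp: ddelta_def)
    have "rat_of_nat \<alpha> \<le> of_int (ddelta \<eta> \<delta>T \<delta>X) / of_nat \<eta>" using aA False by (simp add: Aval_def)
    then have "rat_of_nat \<alpha> * of_nat \<eta> \<le> of_int (ddelta \<eta> \<delta>T \<delta>X)" using \<open>\<eta> > 0\<close>
      by (simp add: le_divide_eq)
    then have "of_int (int \<eta> * int \<alpha>) \<le> (of_int (ddelta \<eta> \<delta>T \<delta>X) :: rat)" by (simp add: mult.commute)
    then have h: "int \<eta> * int \<alpha> \<le> ddelta \<eta> \<delta>T \<delta>X" by (simp only: of_int_le_iff)
    then have "int \<eta> * int \<alpha> < int \<eta> * int \<delta>X" using False by (simp add: ddelta_def)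
    then have "\<alpha> < \<delta>X" by (simp add: mult_less_cancel_left)
    then show ?thesis using h by simp
  qed
  moreover have "int \<beta> \<le> ddelta \<eta> \<delta>T \<delta>X - int \<eta> * int \<alpha>"
    using assms(1) unfolding Kset_def by auto
  ultimately show ?thesis by simp
qed

lemma LHS_iff:
  assumes "q \<ge> 1"
  shows "((c1,c2,d1,d2) \<in> \<Union>{Delta_star q \<eta> \<delta>T \<delta>X | \<delta>T \<delta>X. ddelta \<eta> \<delta>T \<delta>X \<ge> 0}) \<longleftrightarrow>
    (d2,c2) \<in> Kstar q \<eta> (int c1 + int c2 - int \<eta> * int d1) (d1+d2)"
proof
  assume "(c1,c2,d1,d2) \<in> \<Union>{Delta_star q \<eta> \<delta>T \<delta>X | \<delta>T \<delta>X. ddelta \<eta> \<delta>T \<delta>X \<ge> 0}"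
  then obtain \<delta>T \<delta>X \<alpha> \<beta> where nn: "ddelta \<eta> \<delta>T \<delta>X \<ge> 0" and K: "(\<alpha>,\<beta>) \<in> Kstar q \<eta> \<delta>T \<delta>X"
    and eq: "(c1,c2,d1,d2) = Mmon \<eta> \<delta>T \<delta>X \<alpha> \<beta>"
    unfolding Delta_star_def by auto
  have KK: "(\<alpha>,\<beta>) \<in> Kset q \<eta> \<delta>T \<delta>X" using K unfolding Kstar_def by (auto split: if_splits)
  from Kset_bounds[OF KK nn] have b: "\<alpha> \<le> \<delta>X" "int \<eta> * int \<alpha> + int \<beta> \<le> ddelta \<eta> \<delta>T \<delta>X" by auto
  from eq have e: "c1 = nat (ddelta \<eta> \<delta>T \<delta>X - int \<eta> * int \<alpha> - int \<beta>)" "c2 = \<beta>" "d1 = \<delta>X - \<alpha>" "d2 = \<alpha>"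
    by (auto simp: Mmon_def)
  have "\<delta>X = d1 + d2" using e b by simp
  moreover have "\<delta>T = int c1 + int c2 - int \<eta> * int d1"
    using e b by (simp add: ddelta_def of_nat_diff algebra_simps)
  ultimately show "(d2,c2) \<in> Kstar q \<eta> (int c1 + int c2 - int \<eta> * int d1) (d1+d2)"
    using K e by simp
next
  assume "(d2,c2) \<in> Kstar q \<eta> (int c1 + int c2 - int \<eta> * int d1) (d1+d2)"
  then have "(c1,c2,d1,d2) \<in> Delta_star q \<eta> (int c1 + int c2 - int \<eta> * int d1) (d1+d2)"
    unfolding Delta_star_def using Mmon_self by (metis (no_types, lifting) case_prod_conv image_eqI)
  moreover have "ddelta \<eta> (int c1 + int c2 - int \<eta> * int d1) (d1+d2) \<ge> 0" by (simp add: dd)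
  ultimately show "(c1,c2,d1,d2) \<in> \<Union>{Delta_star q \<eta> \<delta>T \<delta>X | \<delta>T \<delta>X. ddelta \<eta> \<delta>T \<delta>X \<ge> 0}"
    by blast
qed



lemma ml_asym: "mono_less a b \<Longrightarrow> \<not> mono_less b a"
  by (cases a rule: prod_cases4; cases b rule: prod_cases4) (auto simp: mono_less_def)

lemma ml_irrefl: "\<not> mono_less a a"
  by (cases a rule: prod_cases4) (auto simp: mono_less_def)

lemma Mmon_less: "r \<le> d1+d2 \<Longrightarrow> r < d2 \<Longrightarrow> mono_less (Mmon \<eta> \<delta>T (d1+d2) r b) (c1,c2,d1,d2)"
  by (simp add: Mmon_def mono_less_def)

lemma pi_less:
  assumes q2: "q \<ge> 2"
    and nK: "(d2,c2) \<notin> Kstar q \<eta> (int c1 + int c2 - int \<eta> * int d1) (d1+d2)"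
    and nz: "(pi_mon q \<eta> (int c1 + int c2 - int \<eta> * int d1) (d1+d2) (c1,c2,d1,d2) x :: 'a::ring_1) \<noteq> 0"
  shows "mono_less x (c1,c2,d1,d2)"
proof -
  define dT where "dT = int c1 + int c2 - int \<eta> * int d1"
  define s where "s = nat (ddelta \<eta> dT (d1+d2) div int \<eta>)"
  note nK' = nK[folded dT_def] and nz' = nz[folded dT_def]
  show ?thesis
  proof (cases "Hcond q \<eta> dT (d1+d2) \<and> d2 = s \<and> c2 = 0")
    case True
    then have "(\<eta> \<ge> 2 \<and> c1 = 0 \<and> c2 = 0 \<and> d1 \<ge> 1 \<and> d2 \<ge> q)"
      using H_iff[of q \<eta> c1 c2 d1 d2] unfolding dT_def s_def by auto
    then have dq: "d2 \<ge> q" by simp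
    define r where "r = (s - 1) mod (q - 1) + 1"
    define k where "k = (s - r) div (q - 1)"
    have "(s - 1) mod (q - 1) < q - 1" using q2 by simp
    then have rl: "r < d2" using dq q2 unfolding r_def by linarith
    have pe: "(pi_mon q \<eta> dT (d1+d2) (c1,c2,d1,d2) x :: 'a) =
       mon_poly (Mmon \<eta> dT (d1+d2) r 0) x
                 + mon_poly (Mmon \<eta> dT (d1+d2) r (\<eta> * k * (q - 1))) x
                 - mon_poly (Mmon \<eta> dT (d1+d2) r (q - 1)) x"
      using True unfolding pi_mon_def Let_def r_def k_def s_def by simp
    have "x \<in> {Mmon \<eta> dT (d1+d2) r 0, Mmon \<eta> dT (d1+d2) r (\<eta> * k * (q - 1)), Mmon \<eta> dT (d1+d2) r (q - 1)}"
    proof (rule ccontr)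
      assume "x \<notin> {Mmon \<eta> dT (d1+d2) r 0, Mmon \<eta> dT (d1+d2) r (\<eta> * k * (q - 1)), Mmon \<eta> dT (d1+d2) r (q - 1)}"
      then have "(pi_mon q \<eta> dT (d1+d2) (c1,c2,d1,d2) x :: 'a) = 0" unfolding pe mon_poly_def by auto
      then show False using nz' by simp
    qed
    then show ?thesis using Mmon_less[of r d1 d2] rl by auto
  next
    case False
    define A where "A = Aval \<eta> dT (d1+d2)"
    define a where "a = (if d2 = 0 \<or> of_nat d2 = A then d2 else (d2 - 1) mod (q - 1) + 1)"
    define b where "b = (if c2 = 0 then 0
                else if int c2 = ddelta \<eta> dT (d1+d2) - int \<eta> * int d2
                  then nat (ddelta \<eta> dT (d1+d2) - int \<eta> * int a)
                else (c2 - 1) mod (q - 1) + 1)"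
    have pe: "(pi_mon q \<eta> dT (d1+d2) (c1,c2,d1,d2) x :: 'a) = mon_poly (Mmon \<eta> dT (d1+d2) a b) x"
    proof -
      have F': "\<not> (Hcond q \<eta> dT (d1+d2) \<and> d2 = nat (ddelta \<eta> dT (d1+d2) div int \<eta>) \<and> c2 = 0)"
        using False s_def by simp
      have pm: "pmap q \<eta> dT (d1+d2) d2 c2 = (a,b)"
        unfolding pmap_def Let_def a_def b_def A_def by simp
      show ?thesis
        unfolding pi_mon_def Let_def snd_conv fst_conv if_not_P[OF F'] pm by simp
    qed
    then have xe: "x = Mmon \<eta> dT (d1+d2) a b" using nz' unfolding mon_poly_def by (auto split: if_splits)
    have DD: "ddelta \<eta> dT (d1+d2) = int c1 + int c2 + int \<eta> * int d2" unfolding dT_def by (rule dd)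
    have nKs: "(d2,c2) \<notin> Kset q \<eta> dT (d1+d2)"
      using nK' False unfolding Kstar_def s_def by (auto split: if_splits)
    then have nKs2: "\<not> ((d2 < q \<or> of_nat d2 = A) \<and> (c1 = 0 \<or> c2 < q))"
      using Kset_iff[of q d2 c2 \<eta> c1 d1] q2 unfolding dT_def A_def by auto
    have qq: "q - 1 > 0" using q2 by simp
    have al: "a \<le> d2"
    proof (cases "d2 = 0 \<or> of_nat d2 = A")
      case True then show ?thesis unfolding a_def by simp
    next
      case False
      have "(d2 - 1) mod (q - 1) \<le> d2 - 1" by simp
      moreover have "a = (d2 - 1) mod (q - 1) + 1" using False unfolding a_def by (simp only: if_False)
      ultimately show ?thesis using False by linarith
    qed
    have aeq: "a = d2 \<Longrightarrow> d2 < q \<or> of_nat d2 = A"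
    proof -
      assume "a = d2"
      show "d2 < q \<or> of_nat d2 = A"
      proof (cases "d2 = 0 \<or> of_nat d2 = A")
        case True then show ?thesis using q2 by auto
      next
        case False
        then have "(d2 - 1) mod (q - 1) + 1 = d2" using \<open>a = d2\<close> unfolding a_def by simp
        moreover have "(d2 - 1) mod (q - 1) < q - 1" using qq by simp
        ultimately show ?thesis by linarith
      qed
    qed
    have beq: "a = d2 \<Longrightarrow> b \<le> c2 \<and> (b = c2 \<longrightarrow> (c1 = 0 \<or> c2 < q))"
    proof -
      assume "a = d2"
      show "b \<le> c2 \<and> (b = c2 \<longrightarrow> (c1 = 0 \<or> c2 < q))"
      proof (cases "c2 = 0")
        case True then show ?thesis unfolding b_def using q2 by simp
      next
        case c2n: False
        show ?thesis
        proof (cases "int c2 = ddelta \<eta> dT (d1+d2) - int \<eta> * int d2")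
          case True
          then have "c1 = 0" using DD by simp
          then show ?thesis unfolding b_def using True c2n \<open>a = d2\<close> DD by simp
        next
          case False
          then have be: "b = (c2 - 1) mod (q - 1) + 1" unfolding b_def using c2n by simp
          have "(c2 - 1) mod (q - 1) \<le> c2 - 1" by simp
          moreover have "(c2 - 1) mod (q - 1) < q - 1" using qq by simp
          ultimately show ?thesis using be c2n by linarith
        qed
      qed
    qed
    show ?thesis
    proof (cases "a < d2")
      case True
      then show ?thesis using xe Mmon_less[of a d1 d2] al by simp
    next
      case False
      then have ad: "a = d2" using al by simp
      from beq[OF ad] aeq[OF ad] nKs2 have "b < c2" by auto
      then show ?thesis using xe ad by (simp add: Mmon_def mono_less_def)
    qed
  qed
qed



lemma G_lead:
  fixes g :: "mono \<Rightarrow> 'a::field"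
  assumes q2: "q \<ge> 2" and gG: "g \<in> Gset q \<eta>" and L: "is_leading g l"
  shows "l \<notin> \<Union>{Delta_star q \<eta> \<delta>T \<delta>X | \<delta>T \<delta>X. ddelta \<eta> \<delta>T \<delta>X \<ge> 0}"
proof -
  obtain \<delta>T \<delta>X m where m: "m \<in> Mons \<eta> \<delta>T \<delta>X" "m \<notin> Delta_star q \<eta> \<delta>T \<delta>X"
    and ge: "g = (\<lambda>x. mon_poly m x - pi_mon q \<eta> \<delta>T \<delta>X m x)"
    using gG unfolding Gset_def by auto
  obtain c1 c2 d1 d2 where me: "m = (c1,c2,d1,d2)" by (cases m rule: prod_cases4)
  have bd: "\<delta>T = int c1 + int c2 - int \<eta> * int d1" "\<delta>X = d1 + d2"
    using m(1) unfolding Mons_def bideg_def me by auto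
  have nK: "(d2,c2) \<notin> Kstar q \<eta> (int c1 + int c2 - int \<eta> * int d1) (d1+d2)"
  proof
    assume "(d2,c2) \<in> Kstar q \<eta> (int c1 + int c2 - int \<eta> * int d1) (d1+d2)"
    then have "m \<in> Delta_star q \<eta> \<delta>T \<delta>X"
      unfolding Delta_star_def bd me using Mmon_self[of \<eta> c1 c2 d1 d2]
      by (metis (no_types, lifting) case_prod_conv image_eqI)
    then show False using m(2) by simp
  qed
  have pl: "\<And>x. (pi_mon q \<eta> \<delta>T \<delta>X m x :: 'a) \<noteq> 0 \<Longrightarrow> mono_less x m"
    unfolding bd me using pi_less[OF q2 nK] by blast
  have pm0: "(pi_mon q \<eta> \<delta>T \<delta>X m m :: 'a) = 0" using pl ml_irrefl by blast
  have gm: "g m \<noteq> 0" unfolding ge using pm0 by (simp add: mon_poly_def)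
  have "g l \<noteq> 0" using L unfolding is_leading_def by simp
  then have "l = m \<or> mono_less l m" unfolding ge using pl by (auto simp: mon_poly_def split: if_splits)
  moreover have "m = l \<or> mono_less m l" using L gm unfolding is_leading_def by blast
  ultimately have "l = m" using ml_asym by blast
  then show ?thesis using nK LHS_iff[of q] q2 me by simp
qed

lemma G_exists:
  assumes q2: "q \<ge> 2"
    and nL: "m \<notin> \<Union>{Delta_star q \<eta> \<delta>T \<delta>X | \<delta>T \<delta>X. ddelta \<eta> \<delta>T \<delta>X \<ge> 0}"
  shows "\<exists>g \<in> (Gset q \<eta> :: (mono \<Rightarrow> 'a::field) set). is_leading g m"
proof -
  obtain c1 c2 d1 d2 where me: "m = (c1,c2,d1,d2)" by (cases m rule: prod_cases4)
  define \<delta>T where "\<delta>T = int c1 + int c2 - int \<eta> * int d1"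
  define \<delta>X where "\<delta>X = d1 + d2"
  have nK: "(d2,c2) \<notin> Kstar q \<eta> \<delta>T \<delta>X"
  proof -
    have q1: "q \<ge> 1" using q2 by simp
    show ?thesis using nL LHS_iff[OF q1, of c1 c2 d1 d2 \<eta>] unfolding me \<delta>T_def \<delta>X_def by blast
  qed
  have mM: "m \<in> Mons \<eta> \<delta>T \<delta>X" unfolding Mons_def bideg_def me \<delta>T_def \<delta>X_def by simp
  have d0: "ddelta \<eta> \<delta>T \<delta>X \<ge> 0" unfolding \<delta>T_def \<delta>X_def dd by simp
  have mD: "m \<notin> Delta_star q \<eta> \<delta>T \<delta>X"
  proof
    assume "m \<in> Delta_star q \<eta> \<delta>T \<delta>X"
    then have "m \<in> \<Union>{Delta_star q \<eta> \<delta>T \<delta>X | \<delta>T \<delta>X. ddelta \<eta> \<delta>T \<delta>X \<ge> 0}"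
      using d0 by blast
    with nL show False by contradiction
  qed
  define g where "g = (\<lambda>x. mon_poly m x - (pi_mon q \<eta> \<delta>T \<delta>X m x :: 'a))"
  have gG: "g \<in> Gset q \<eta>"
    unfolding Gset_def mem_Collect_eq
    by (rule exI[of _ \<delta>T], rule exI[of _ \<delta>X], rule exI[of _ m]) (simp add: d0 mM mD g_def)
  have pl: "\<And>x. (pi_mon q \<eta> \<delta>T \<delta>X m x :: 'a) \<noteq> 0 \<Longrightarrow> mono_less x m"
    unfolding \<delta>T_def \<delta>X_def me using pi_less[OF q2 nK[unfolded \<delta>T_def \<delta>X_def]] by blast
  have pm0: "(pi_mon q \<eta> \<delta>T \<delta>X m m :: 'a) = 0" using pl ml_irrefl by blast
  have "is_leading g m"
    unfolding is_leading_def g_def using pm0 pl by (auto simp: mon_poly_def)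
  then show ?thesis using gG by blast
qed

theorem lemma3p9:
  fixes q \<eta> :: nat
  assumes "card (UNIV :: ('a::{finite,field}) set) = q"
  shows "(\<Union>{Delta_star q \<eta> \<delta>T \<delta>X | \<delta>T \<delta>X. ddelta \<eta> \<delta>T \<delta>X \<ge> 0})
       = {m :: mono. \<not> (\<exists>g \<in> (Gset q \<eta> :: (mono \<Rightarrow> 'a) set).
                          \<exists>l. is_leading g l \<and> mono_dvd l m)}"
proof -
  have "card {0::'a, 1} \<le> card (UNIV :: 'a set)" by (rule card_mono) auto
  then have q2: "q \<ge> 2" using assms by simp
  let ?L = "\<Union>{Delta_star q \<eta> \<delta>T \<delta>X | \<delta>T \<delta>X. ddelta \<eta> \<delta>T \<delta>X \<ge> 0}"
  have down: "l \<in> ?L" if "m \<in> ?L" "mono_dvd l m" for l m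
  proof -
    obtain c1 c2 d1 d2 where me: "m = (c1,c2,d1,d2)" by (cases m rule: prod_cases4)
    obtain a1 a2 a3 a4 where le: "l = (a1,a2,a3,a4)" by (cases l rule: prod_cases4)
    have q1: "q \<ge> 1" using q2 by simp
    have "(d2,c2) \<in> Kstar q \<eta> (int c1 + int c2 - int \<eta> * int d1) (d1+d2)"
      using that(1) LHS_iff[OF q1, of c1 c2 d1 d2 \<eta>] me by blast
    then have "(c1 = 0 \<or> c2 < q) \<and> (d2 < q \<or> d1 = 0 \<or> (\<eta> = 1 \<and> c1 = 0 \<and> c2 = 0))"
      using Kstar_iff[OF q1, of d2 c2 \<eta> c1 d1] by simp
    moreover have "a1 \<le> c1" "a2 \<le> c2" "a3 \<le> d1" "a4 \<le> d2"
      using that(2) unfolding me le mono_dvd_def by auto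
    ultimately have "(a1 = 0 \<or> a2 < q) \<and> (a4 < q \<or> a3 = 0 \<or> (\<eta> = 1 \<and> a1 = 0 \<and> a2 = 0))"
      by (metis le_0_eq le_less_trans)
    then have "(a4,a2) \<in> Kstar q \<eta> (int a1 + int a2 - int \<eta> * int a3) (a3+a4)"
      using Kstar_iff[OF q1, of a4 a2 \<eta> a1 a3] by simp
    then show ?thesis
      using LHS_iff[OF q1, of a1 a2 a3 a4 \<eta>] le by blast
  qed
  show ?thesis
  proof (intro set_eqI iffI)
    fix m assume mL: "m \<in> ?L"
    show "m \<in> {m :: mono. \<not> (\<exists>g \<in> (Gset q \<eta> :: (mono \<Rightarrow> 'a) set).
                          \<exists>l. is_leading g l \<and> mono_dvd l m)}"
    proof -
      have "\<not> (\<exists>g \<in> (Gset q \<eta> :: (mono \<Rightarrow> 'a) set). \<exists>l. is_leading g l \<and> mono_dvd l m)"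
      proof
        assume "\<exists>g \<in> (Gset q \<eta> :: (mono \<Rightarrow> 'a) set). \<exists>l. is_leading g l \<and> mono_dvd l m"
        then obtain g :: "mono \<Rightarrow> 'a" and l where g1: "g \<in> Gset q \<eta>" and g2: "is_leading g l"
          and g3: "mono_dvd l m"
          by blast
        have "l \<notin> ?L" by (rule G_lead[OF q2 g1 g2])
        moreover have "l \<in> ?L" by (rule down[OF mL g3])
        ultimately show False by contradiction
      qed
      then show ?thesis by simp
    qed
  next
    fix m assume mR: "m \<in> {m :: mono. \<not> (\<exists>g \<in> (Gset q \<eta> :: (mono \<Rightarrow> 'a) set).
                          \<exists>l. is_leading g l \<and> mono_dvd l m)}"
    show "m \<in> ?L"
    proof (rule ccontr)
      assume "m \<notin> ?L"
      then obtain g where "g \<in> (Gset q \<eta> :: (mono \<Rightarrow> 'a) set)" "is_leading g m"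
        using G_exists[OF q2] by blast
      moreover have "mono_dvd m m" by (cases m rule: prod_cases4) (simp add: mono_dvd_def)
      ultimately show False using mR by blast
    qed
  qed
qed

end
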